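(* Let $n, r, d$ be positive integers with $n\geqslant r+1$ and $d\geqslant2$. Then $\mathcal{C}_r^d$ is a percolating set of $K_n^d$ in the $r$-neighbor bootstrap percolation process.
   Context: All graphs are finite, simple and undirected. For a nonnegative integer $r$ and a graph $G$, the $r$-neighbor bootstrap percolation process on $G$ starts with a set $A_0\subseteq V(G)$ of initially active vertices, and for $i\geqslant 1$, $A_i=A_{i-1}\cup\{v\in V(G) : |N(v)\cap A_{i-1}|\geqslant r\}$. The set $A_0$ is a percolating set if $\bigcup_{i\geqslant 0}A_i=V(G)$. $K_n^d$ has vertex set $[\![n]\!]^d$, where $[\![n]\!]=\{0,1,\ldots,n-1\}$, and two vertices are adjacent iff they differ in exactly one coordinate. Let $\delta=(d-2)/(d-1)$. For $t=(t_1,\ldots,t_d)\in\{0,1\}^d$ and $P\subseteq[\![n]\!]^d$, let $P(t)$ be the set of $(x_1,\ldots,x_d)\in[\![n]\!]^d$ for which there is $(p_1,\ldots,p_d)\in P$ with $x_i=t_i(n-1-p_i)+(1-t_i)p_i$ for all $i$. Let $A_r^d=\{(x_1,\ldots,x_d)\in[\![n]\!]^d : \sum_{i=1}^d x_i\leqslant\lceil r/2\rceil-1\}$, $B_r^d=\{(x_1,\ldots,x_d)\in[\![n]\!]^d : x_1+x_2+\delta\sum_{i=3}^d x_i<\delta(\lceil r/2\rceil-1)\}$, $C_r^d=A_r^d\setminus B_r^d$, $T=\{(t_1,\ldots,t_d)\in\{0,1\}^d : t_1=t_2\}$, and $\mathcal{C}_r^d=\bigcup_{t\in T}C_r^d(t)$.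 *)

theory Defs
  imports Complex_Main
begin

definition bp_step :: "'a set \<Rightarrow> ('a \<Rightarrow> 'a \<Rightarrow> bool) \<Rightarrow> nat \<Rightarrow> 'a set \<Rightarrow> 'a set" where
  "bp_step V adj r A = A \<union> {v \<in> V. card {u \<in> V. adj v u \<and> u \<in> A} \<ge> r}"

definition bp_iter :: "'a set \<Rightarrow> ('a \<Rightarrow> 'a \<Rightarrow> bool) \<Rightarrow> nat \<Rightarrow> 'a set \<Rightarrow> nat \<Rightarrow> 'a set" where
  "bp_iter V adj r A0 i = ((bp_step V adj r) ^^ i) A0"

definition percolating :: "'a set \<Rightarrow> ('a \<Rightarrow> 'a \<Rightarrow> bool) \<Rightarrow> nat \<Rightarrow> 'a set \<Rightarrow> bool" where
  "percolating V adj r A0 \<longleftrightarrow> A0 \<subseteq> V \<and> (\<Union>i. bp_iter V adj r A0 i) = V"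

definition hverts :: "nat \<Rightarrow> nat \<Rightarrow> nat list set" where
  "hverts n d = {x. length x = d \<and> (\<forall>i<d. x ! i < n)}"

definition hadj :: "nat \<Rightarrow> nat list \<Rightarrow> nat list \<Rightarrow> bool" where
  "hadj d x y \<longleftrightarrow> card {i. i < d \<and> x ! i \<noteq> y ! i} = 1"

section \<open>The sets A, B, C and the reflected union (coordinates 0-based)\<close>

definition delta :: "nat \<Rightarrow> real" where
  "delta d = (real d - 2) / (real d - 1)"

definition setA :: "nat \<Rightarrow> nat \<Rightarrow> nat \<Rightarrow> nat list set" where
  "setA n r d = {x \<in> hverts n d. real (\<Sum>i<d. x ! i) \<le> real_of_int \<lceil>real r / 2\<rceil> - 1}"

definition setB :: "nat \<Rightarrow> nat \<Rightarrow> nat \<Rightarrow> nat list set" where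
  "setB n r d = {x \<in> hverts n d.
     real (x ! 0) + real (x ! 1) + delta d * (\<Sum>i\<in>{2..<d}. real (x ! i))
       < delta d * (real_of_int \<lceil>real r / 2\<rceil> - 1)}"

definition setC :: "nat \<Rightarrow> nat \<Rightarrow> nat \<Rightarrow> nat list set" where
  "setC n r d = setA n r d - setB n r d"

definition reflect :: "nat \<Rightarrow> nat list \<Rightarrow> nat list set \<Rightarrow> nat list set" where
  "reflect n t P = {x \<in> hverts n (length t). \<exists>p\<in>P. length p = length t \<and>
      (\<forall>i<length t. x ! i = t ! i * (n - 1 - p ! i) + (1 - t ! i) * p ! i)}"

definition Tset :: "nat \<Rightarrow> nat list set" where
  "Tset d = {t. length t = d \<and> (\<forall>i<d. t ! i \<le> 1) \<and> t ! 0 = t ! 1}"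

definition calC :: "nat \<Rightarrow> nat \<Rightarrow> nat \<Rightarrow> nat list set" where
  "calC n r d = (\<Union>t\<in>Tset d. reflect n t (setC n r d))"

end

theory Submission
  imports Defs
begin


lemma hverts_finite: "finite (hverts n d)"
proof -
  have "hverts n d \<subseteq> {xs. set xs \<subseteq> {..<n} \<and> length xs = d}"
    by (auto simp: hverts_def in_set_conv_nth)
  moreover have "finite {xs. set xs \<subseteq> {..<n} \<and> length xs = d}"
    using finite_lists_length_eq[of "{..<n}" d] by simp
  ultimately show ?thesis by (rule finite_subset)
qed

lemma bp_iter_0[simp]: "bp_iter V adj r A 0 = A"
  by (simp add: bp_iter_def)

lemma bp_iter_Suc: "bp_iter V adj r A (Suc i) = bp_step V adj r (bp_iter V adj r A i)"
  by (simp add: bp_iter_def)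

lemma bp_iter_mono: "i \<le> j \<Longrightarrow> bp_iter V adj r A i \<subseteq> bp_iter V adj r A j"
proof (induction j rule: dec_induct)
  case base then show ?case by simp
next
  case (step j) then show ?case by (auto simp: bp_iter_Suc bp_step_def)
qed

lemma bp_iter_sub: "A \<subseteq> V \<Longrightarrow> bp_iter V adj r A i \<subseteq> V"
  by (induction i) (auto simp: bp_iter_Suc bp_step_def)

lemma finite_in_chain:
  assumes "finite N" "N \<subseteq> (\<Union>i. bp_iter V adj r A i)"
  shows "\<exists>m. N \<subseteq> bp_iter V adj r A m"
  using assms
proof (induction N rule: finite_induct)
  case empty then show ?case by simp
next
  case (insert a N)
  then obtain m where m: "N \<subseteq> bp_iter V adj r A m" by auto
  from insert obtain k where k: "a \<in> bp_iter V adj r A k" by auto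
  have "N \<subseteq> bp_iter V adj r A (max m k)" using m bp_iter_mono[of m "max m k" V adj r A] by auto
  moreover have "a \<in> bp_iter V adj r A (max m k)" using k bp_iter_mono[of k "max m k" V adj r A] by auto
  ultimately show ?case by auto
qed

lemma cl_closed:
  assumes fin: "finite V" and x: "x \<in> V" and fN: "finite N"
    and sub: "N \<subseteq> (\<Union>i. bp_iter V adj r A i)"
    and nb: "\<forall>u\<in>N. u \<in> V \<and> adj x u" and cardN: "r \<le> card N"
  shows "x \<in> (\<Union>i. bp_iter V adj r A i)"
proof -
  obtain m where m: "N \<subseteq> bp_iter V adj r A m" using finite_in_chain[OF fN sub] by blast
  have "N \<subseteq> {u \<in> V. adj x u \<and> u \<in> bp_iter V adj r A m}" using m nb by auto
  then have "card N \<le> card {u \<in> V. adj x u \<and> u \<in> bp_iter V adj r A m}"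
    by (rule card_mono[rotated]) (use fin in auto)
  then have "x \<in> bp_iter V adj r A (Suc m)"
    using cardN x by (auto simp: bp_iter_Suc bp_step_def)
  then show ?thesis by blast
qed

lemma hverts_upd: "x \<in> hverts n d \<Longrightarrow> v < n \<Longrightarrow> x[i:=v] \<in> hverts n d"
  by (auto simp: hverts_def) (metis nth_list_update_eq nth_list_update_neq)

lemma hadj_upd:
  assumes "x \<in> hverts n d" "i < d" "v \<noteq> x!i"
  shows "hadj d x (x[i:=v])"
proof -
  have "length x = d" using assms by (simp add: hverts_def)
  then have "{j. j < d \<and> x!j \<noteq> x[i:=v]!j} = {i}"
    using assms by (auto simp: nth_list_update)
  then show ?thesis by (simp add: hadj_def)
qed

lemma activate:
  assumes x: "x \<in> hverts n d" and I: "I \<subseteq> {..<d}"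
    and J: "\<And>i. i \<in> I \<Longrightarrow> J i \<subseteq> {..<n} - {x!i}"
    and inC: "\<And>i v. i \<in> I \<Longrightarrow> v \<in> J i \<Longrightarrow> x[i:=v] \<in> (\<Union>k. bp_iter (hverts n d) (hadj d) r A k)"
    and rle: "r \<le> (\<Sum>i\<in>I. card (J i))"
  shows "x \<in> (\<Union>k. bp_iter (hverts n d) (hadj d) r A k)"
proof -
  have lx: "length x = d" using x by (simp add: hverts_def)
  define N where "N = (\<Union>i\<in>I. (\<lambda>v. x[i:=v]) ` J i)"
  have fI: "finite I" using I finite_subset by blast
  have fJ: "\<And>i. i \<in> I \<Longrightarrow> finite (J i)" using J finite_subset[of _ "{..<n}"] by blast
  have cardimg: "card ((\<lambda>v. x[i:=v]) ` J i) = card (J i)" if "i \<in> I" for i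
  proof -
    have "inj_on (\<lambda>v. x[i:=v]) (J i)"
    proof (rule inj_onI)
      fix a b assume "x[i:=a] = x[i:=b]"
      then have "x[i:=a] ! i = x[i:=b] ! i" by simp
      then show "a = b" using that I lx by auto
    qed
    then show ?thesis by (rule card_image)
  qed
  have "card N = (\<Sum>i\<in>I. card ((\<lambda>v. x[i:=v]) ` J i))"
    unfolding N_def
  proof (rule card_UN_disjoint[OF fI])
    show "\<forall>i\<in>I. finite ((\<lambda>v. x[i:=v]) ` J i)" using fJ by blast
    show "\<forall>i\<in>I. \<forall>j\<in>I. i \<noteq> j \<longrightarrow> (\<lambda>v. x[i:=v]) ` J i \<inter> (\<lambda>v. x[j:=v]) ` J j = {}"
    proof (intro ballI impI)
      fix i j assume ij: "i \<in> I" "j \<in> I" "i \<noteq> j"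
      show "(\<lambda>v. x[i:=v]) ` J i \<inter> (\<lambda>v. x[j:=v]) ` J j = {}"
      proof (rule ccontr)
        assume "(\<lambda>v. x[i:=v]) ` J i \<inter> (\<lambda>v. x[j:=v]) ` J j \<noteq> {}"
        then obtain a b where ab: "a \<in> J i" "b \<in> J j" "x[i:=a] = x[j:=b]" by auto
        then have "x[i:=a] ! i = x[j:=b] ! i" by simp
        then have "a = x!i" using ij I lx by auto
        then show False using J[OF ij(1)] ab(1) by auto
      qed
    qed
  qed
  also have "\<dots> = (\<Sum>i\<in>I. card (J i))" using cardimg by simp
  finally have cN: "card N = (\<Sum>i\<in>I. card (J i))" .
  show ?thesis
  proof (rule cl_closed[OF hverts_finite x])
    show "finite N" unfolding N_def using fI fJ by blast
    show "N \<subseteq> (\<Union>k. bp_iter (hverts n d) (hadj d) r A k)" unfolding N_def using inC by blast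
    show "\<forall>u\<in>N. u \<in> hverts n d \<and> hadj d x u"
      unfolding N_def using J I x by (auto intro!: hverts_upd hadj_upd)
    show "r \<le> card N" using cN rle by simp
  qed
qed



lemma ceil_half: "\<lceil>real r / 2\<rceil> = int ((r + 1) div 2)"
proof (cases "even r")
  case True
  then obtain m where "r = 2*m" by blast
  then show ?thesis by simp
next
  case False
  then obtain m where m: "r = 2*m+1" using oddE by blast
  have "real r / 2 = real m + 1/2" using m by simp
  then have "\<lceil>real r / 2\<rceil> = int m + 1" by (simp add: ceiling_eq_iff)
  then show ?thesis using m by simp
qed

locale S =
  fixes n r d :: nat
  assumes r1: "r \<ge> 1" and nr: "n \<ge> r + 1" and d2: "d \<ge> 2"
begin

definition c :: nat where "c = (r + 1) div 2 - 1"

lemma r_le: "r \<le> 2*c + 2" using r1 unfolding c_def by linarith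

lemma n_ge: "2*c + 2 \<le> n" using r1 nr unfolding c_def by linarith

lemma c_real: "real_of_int \<lceil>real r / 2\<rceil> - 1 = real c"
  using r1 unfolding ceil_half c_def by (simp add: of_nat_diff)

definition W :: "nat list \<Rightarrow> nat" where "W p = (\<Sum>i\<in>{2..<d}. p!i)"

lemma sum_split: "(\<Sum>i<d. p!i) = p!0 + p!1 + W p"
proof -
  have "{..<d} = {0,1} \<union> {2..<d}" using d2 by auto
  then have "(\<Sum>i<d. p!i) = (\<Sum>i\<in>{0,1}. p!i) + (\<Sum>i\<in>{2..<d}. p!i)"
    by (simp add: sum.union_disjoint)
  then show ?thesis by (simp add: W_def)
qed

lemma setA_iff: "p \<in> setA n r d \<longleftrightarrow> p \<in> hverts n d \<and> p!0 + p!1 + W p \<le> c"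
proof -
  have "real (\<Sum>i<d. p ! i) \<le> real_of_int \<lceil>real r / 2\<rceil> - 1 \<longleftrightarrow> (\<Sum>i<d. p!i) \<le> c"
    unfolding c_real by (rule of_nat_le_iff)
  then show ?thesis unfolding setA_def sum_split by simp
qed

lemma setB_iff: "p \<in> setB n r d \<longleftrightarrow> p \<in> hverts n d \<and> (d-1)*(p!0+p!1) + (d-2)*W p < (d-2)*c"
proof -
  have dd: "real d - 1 > 0" using d2 by simp
  have "(\<Sum>i\<in>{2..<d}. real (p ! i)) = real (W p)" by (simp add: W_def)
  then have "real (p ! 0) + real (p ! 1) + delta d * (\<Sum>i\<in>{2..<d}. real (p ! i))
       < delta d * (real_of_int \<lceil>real r / 2\<rceil> - 1) \<longleftrightarrow>
       real (p ! 0) + real (p ! 1) + (real d - 2) / (real d - 1) * real (W p)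
       < (real d - 2) / (real d - 1) * real c"
    using c_real by (simp add: delta_def)
  also have "\<dots> \<longleftrightarrow> (real d - 1) * (real (p ! 0) + real (p ! 1)) + (real d - 2) * real (W p)
       < (real d - 2) * real c"
  proof -
    define D where "D = real d - 1"
    have D0: "D > 0" using dd D_def by simp
    have e1: "D * (real (p ! 0) + real (p ! 1) + (real d - 2) / D * real (W p))
       = D * (real (p ! 0) + real (p ! 1)) + (real d - 2) * real (W p)"
      using D0 by (simp add: field_simps)
    have e2: "D * ((real d - 2) / D * real c) = (real d - 2) * real c"
      using D0 by (simp add: field_simps)
    have "real (p ! 0) + real (p ! 1) + (real d - 2) / D * real (W p) < (real d - 2) / D * real c
      \<longleftrightarrow> D * (real (p ! 0) + real (p ! 1) + (real d - 2) / D * real (W p)) < D * ((real d - 2) / D * real c)"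
      using D0 by (simp only: mult_less_cancel_left_pos)
    then have "real (p ! 0) + real (p ! 1) + (real d - 2) / D * real (W p) < (real d - 2) / D * real c
      \<longleftrightarrow> D * (real (p ! 0) + real (p ! 1)) + (real d - 2) * real (W p) < (real d - 2) * real c"
      by (simp only: e1 e2)
    then show ?thesis by (simp only: D_def)
  qed
  also have "\<dots> \<longleftrightarrow> real ((d-1)*(p!0+p!1) + (d-2)*W p) < real ((d-2)*c)"
    using d2 by (simp add: of_nat_diff)
  also have "\<dots> \<longleftrightarrow> (d-1)*(p!0+p!1) + (d-2)*W p < (d-2)*c" by linarith
  finally show ?thesis unfolding setB_def by blast
qed

definition R1 :: "nat \<Rightarrow> nat \<Rightarrow> nat" where "R1 b v = (if b = 0 then v else n - 1 - v)"

definition R :: "nat list \<Rightarrow> nat list \<Rightarrow> nat list" where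
  "R t p = map (\<lambda>i. R1 (t!i) (p!i)) [0..<d]"

lemma R_len[simp]: "length (R t p) = d" by (simp add: R_def)
lemma R_nth[simp]: "i < d \<Longrightarrow> R t p ! i = R1 (t!i) (p!i)" by (simp add: R_def)

lemma R1_lt: "v < n \<Longrightarrow> R1 b v < n" by (simp add: R1_def)
lemma R1_R1: "v < n \<Longrightarrow> R1 b (R1 b v) = v" by (simp add: R1_def)

lemma R_hverts: "p \<in> hverts n d \<Longrightarrow> R t p \<in> hverts n d"
  by (auto simp: hverts_def R1_lt)

lemma R_inv: "p \<in> hverts n d \<Longrightarrow> R t (R t p) = p"
  by (rule nth_equalityI) (auto simp: hverts_def R1_R1)

lemma R_upd: "i < d \<Longrightarrow> length p = d \<Longrightarrow> R t (p[i:=v]) = (R t p)[i := R1 (t!i) v]"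
  by (rule nth_equalityI) (auto simp: nth_list_update)

lemma R_flip: "i < d \<Longrightarrow> length p = d \<Longrightarrow> length t = d \<Longrightarrow>
    R (t[i:=b]) (p[i:=v]) = (R t p)[i := R1 b v]"
  by (rule nth_equalityI) (auto simp: nth_list_update)

lemma T_flip: "t \<in> Tset d \<Longrightarrow> 2 \<le> i \<Longrightarrow> b \<le> 1 \<Longrightarrow> t[i:=b] \<in> Tset d"
  by (auto simp: Tset_def) (metis nth_list_update_eq nth_list_update_neq)

lemma R_calC: assumes "t \<in> Tset d" "p \<in> setC n r d" shows "R t p \<in> calC n r d"
proof -
  have p: "p \<in> hverts n d" using assms(2) by (simp add: setC_def setA_def)
  have lt: "length t = d" using assms(1) by (simp add: Tset_def)
  have "R t p \<in> reflect n t (setC n r d)"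
    unfolding reflect_def lt
  proof (intro CollectI conjI bexI[of _ p])
    show "R t p \<in> hverts n d" using R_hverts p .
    show "length p = d" using p by (simp add: hverts_def)
    show "\<forall>i<d. R t p ! i = t ! i * (n - 1 - p ! i) + (1 - t ! i) * p ! i"
    proof (intro allI impI)
      fix i assume "i < d"
      then have "t!i \<le> 1" using assms(1) by (simp add: Tset_def)
      then have "t!i = 0 \<or> t!i = 1" by auto
      then show "R t p ! i = t ! i * (n - 1 - p ! i) + (1 - t ! i) * p ! i"
        using \<open>i < d\<close> by (auto simp: R1_def)
    qed
  qed (use assms in auto)
  then show ?thesis unfolding calC_def using assms(1) by blast
qed

lemma calC_sub: "calC n r d \<subseteq> hverts n d"
  by (auto simp: calC_def reflect_def Tset_def)

definition CL where "CL = (\<Union>k. bp_iter (hverts n d) (hadj d) r (calC n r d) k)"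

lemma calC_CL: "calC n r d \<subseteq> CL"
  unfolding CL_def by (metis UN_upper bp_iter_0 iso_tuple_UNIV_I)

lemma CL_sub: "CL \<subseteq> hverts n d"
  unfolding CL_def using bp_iter_sub[OF calC_sub] by blast

lemma act:
  assumes "x \<in> hverts n d" "I \<subseteq> {..<d}" "\<And>i. i \<in> I \<Longrightarrow> J i \<subseteq> {..<n} - {x!i}"
    "\<And>i v. i \<in> I \<Longrightarrow> v \<in> J i \<Longrightarrow> x[i:=v] \<in> CL" "r \<le> (\<Sum>i\<in>I. card (J i))"
  shows "x \<in> CL"
  using activate[of x n d I J r "calC n r d"] assms unfolding CL_def by blast

end


context S
begin

definition u :: "nat list \<Rightarrow> nat" where "u p = p!0 + p!1"

lemma sum_split_gen: "(\<Sum>i<d. h i) = h 0 + h 1 + (\<Sum>i\<in>{2..<d}. (h i :: nat))"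
proof -
  have "{..<d} = {0,1} \<union> {2..<d}" using d2 by auto
  then have "(\<Sum>i<d. h i) = (\<Sum>i\<in>{0,1}. h i) + (\<Sum>i\<in>{2..<d}. h i)"
    by (simp only:) (rule sum.union_disjoint, auto)
  then show ?thesis by (simp add: add.assoc)
qed

lemma W_upd_low: "i < 2 \<Longrightarrow> W (p[i:=v]) = W p"
  unfolding W_def by (rule sum.cong) auto

lemma W_upd: assumes "2 \<le> i" "i < d" "length p = d" shows "W (p[i:=v]) + p!i = W p + v"
proof -
  have fin: "finite {2..<d}" by simp
  have iS: "i \<in> {2..<d}" using assms by simp
  have "W (p[i:=v]) = p[i:=v]!i + (\<Sum>j\<in>{2..<d}-{i}. p[i:=v]!j)"
    unfolding W_def using sum.remove[OF fin iS] by blast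
  also have "(\<Sum>j\<in>{2..<d}-{i}. p[i:=v]!j) = (\<Sum>j\<in>{2..<d}-{i}. p!j)"
    by (rule sum.cong) auto
  finally have 1: "W (p[i:=v]) = v + (\<Sum>j\<in>{2..<d}-{i}. p!j)" using assms by simp
  have 2: "W p = p!i + (\<Sum>j\<in>{2..<d}-{i}. p!j)"
    unfolding W_def using sum.remove[OF fin iS] by blast
  show ?thesis using 1 2 by simp
qed

lemma u_upd_high: "2 \<le> i \<Longrightarrow> u (p[i:=v]) = u p"
  by (simp add: u_def)

lemma u_upd_low: "i < 2 \<Longrightarrow> length p = d \<Longrightarrow> u (p[i:=v]) + p!i = u p + v"
  using d2 by (cases i) (auto simp: u_def nth_list_update)

lemma nth_le_s: "i < d \<Longrightarrow> p!i \<le> u p + W p"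
proof -
  assume i: "i < d"
  show ?thesis
  proof (cases "i < 2")
    case True then show ?thesis by (cases i) (auto simp: u_def)
  next
    case False
    then have "p!i \<le> W p" unfolding W_def using i by (intro member_le_sum) auto
    then show ?thesis by simp
  qed
qed

lemma R1_inj: "inj_on (R1 b) {..<n}"
  by (rule inj_onI) (auto simp: R1_def split: if_splits)

lemma R1_opp: "b \<le> 1 \<Longrightarrow> v \<le> c \<Longrightarrow> w \<le> c \<Longrightarrow> R1 (1-b) v \<noteq> R1 b w"
  using n_ge by (cases "b = 0") (auto simp: R1_def)

lemma card_R1: "X \<subseteq> {..<n} \<Longrightarrow> card (R1 b ` X) = card X"
  using card_image[OF inj_on_subset[OF R1_inj]] by blast

lemma card_R1_both: assumes "b \<le> 1" "X \<subseteq> {..c}"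
  shows "card (R1 b ` X \<union> R1 (1-b) ` X) = 2 * card X"
proof -
  have Xn: "X \<subseteq> {..<n}" using assms(2) n_ge by auto
  have fX: "finite X" using assms(2) finite_subset by blast
  have "R1 b ` X \<inter> R1 (1-b) ` X = {}"
  proof (rule ccontr)
    assume "R1 b ` X \<inter> R1 (1-b) ` X \<noteq> {}"
    then obtain v w where "v \<in> X" "w \<in> X" "R1 b w = R1 (1-b) v" by auto
    then show False using R1_opp[OF assms(1), of v w] assms(2) by auto
  qed
  then have "card (R1 b ` X \<union> R1 (1-b) ` X) = card (R1 b ` X) + card (R1 (1-b) ` X)"
    using fX by (simp add: card_Un_disjoint)
  then show ?thesis using card_R1[OF Xn] by simp
qed

lemma Tset_le1: "t \<in> Tset d \<Longrightarrow> i < d \<Longrightarrow> t!i \<le> 1"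
  by (simp add: Tset_def)

lemma Tset_len: "t \<in> Tset d \<Longrightarrow> length t = d"
  by (simp add: Tset_def)

lemma hv_len: "p \<in> hverts n d \<Longrightarrow> length p = d"
  by (simp add: hverts_def)

lemma hv_upd': "p \<in> hverts n d \<Longrightarrow> v \<le> c \<Longrightarrow> p[i:=v] \<in> hverts n d"
proof -
  assume "p \<in> hverts n d" "v \<le> c"
  moreover have "v < n" using \<open>v \<le> c\<close> n_ge by linarith
  ultimately show ?thesis by (intro hverts_upd)
qed

end


context S
begin

lemma card_two_ranges:
  assumes "f < g"
  shows "card ({..<a} \<union> {a+g-f..a+g}) = a + f + 1"
proof -
  have "{..<a} \<inter> {a+g-f..a+g} = {}" using assms by auto
  then have "card ({..<a} \<union> {a+g-f..a+g}) = card {..<a} + card {a+g-f..a+g}"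
    by (simp add: card_Un_disjoint)
  then show ?thesis using assms by simp
qed

lemma step1:
  assumes "t \<in> Tset d" "p \<in> hverts n d" "u p + W p \<le> c"
  shows "R t p \<in> CL"
  using assms
proof (induction "(c - u p)*(c+1) + W p" arbitrary: t p rule: less_induct)
  case less
  note tT = less.prems(1) and pV = less.prems(2) and sA = less.prems(3)
  have lp: "length p = d" using pV by (rule hv_len)
  have lt: "length t = d" using tT by (rule Tset_len)
  have pA: "p \<in> setA n r d" using pV sA by (simp add: setA_iff u_def)
  show ?case
  proof (cases "(d-1)*u p + (d-2)*W p < (d-2)*c")
    case False
    then have "p \<notin> setB n r d" by (simp add: setB_iff u_def)
    then have "p \<in> setC n r d" using pA by (simp add: setC_def)
    then show ?thesis using R_calC[OF tT] calC_CL by blast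
  next
    case True
    define U where "U = u p"
    define w where "w = W p"
    have d3: "d \<ge> 3"
    proof (rule ccontr)
      assume "\<not> d \<ge> 3" then have "d = 2" using d2 by simp
      then show False using True by simp
    qed
    define e where "e = d - 2"
    have e1: "e \<ge> 1" using d3 e_def by simp
    have dm1: "d - 1 = e + 1" using d3 e_def by simp
    define f where "f = U div e"
    define g where "g = c - U - w"
    have Tr: "(e+1)*U + e*w < e*c" using True dm1 unfolding e_def U_def w_def by simp
    have Uwc: "U + w \<le> c" using sA U_def w_def by simp
    have gsum: "c = U + w + g" using Uwc unfolding g_def by simp
    have ef: "e * f \<le> U" unfolding f_def by simp
    have ef1: "U < e * (f + 1)"
    proof -
      have "e * (U div e) + U mod e = U" by (rule mult_div_mod_eq)
      moreover have "U mod e < e" using e1 by simp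
      ultimately have "U < e * (U div e) + e" by linarith
      then show ?thesis unfolding f_def by (simp add: algebra_simps)
    qed
    have egU: "U < e * g"
    proof -
      have "c = U + w + g" using Uwc unfolding g_def by simp
      then have "e * c = e * U + e * w + e * g" by (simp add: algebra_simps)
      moreover have "(e+1)*U = e*U + U" by (simp add: algebra_simps)
      ultimately show ?thesis using Tr by linarith
    qed
    have fg: "f < g"
    proof (rule ccontr)
      assume "\<not> f < g" then have "g \<le> f" by simp
      then have "e * g \<le> e * f" by (rule mult_le_mono2)
      then show False using egU ef by linarith
    qed
    define x where "x = R t p"
    define Sx where "Sx = (\<lambda>i. {..<p!i} \<union> {p!i+g-f..p!i+g})"
    define J where "J = (\<lambda>i. if i < 2 then R1 (t!i) ` {p!i+1..p!i+g}
                              else R1 (t!i) ` Sx i \<union> R1 (1 - t!i) ` Sx i)"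
    have xV: "x \<in> hverts n d" unfolding x_def using pV by (rule R_hverts)
    have pig: "p!i + g \<le> c" if "i < d" for i
      using nth_le_s[OF that, of p] gsum unfolding U_def w_def by linarith
    have Sxc: "Sx i \<subseteq> {..c}" if "i < d" for i
    proof
      fix v assume "v \<in> Sx i"
      then have "v \<le> p!i + g" unfolding Sx_def by auto
      then show "v \<in> {..c}" using pig[OF that] by simp
    qed
    have IH: "R t' p' \<in> CL" if "t' \<in> Tset d" "p' \<in> hverts n d" "u p' + W p' \<le> c"
       "(c - u p')*(c+1) + W p' < (c - u p)*(c+1) + W p" for t' p'
      using that apply -
      apply (rule less.hyps)
      apply assumption+
      done
    have inCL: "x[i:=v] \<in> CL" if i: "i < d" and v: "v \<in> J i" for i v
    proof (cases "i < 2")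
      case True
      then obtain v' where v': "v' \<in> {p!i+1..p!i+g}" "v = R1 (t!i) v'"
        using v unfolding J_def by auto
      define p' where "p' = p[i:=v']"
      have eq: "x[i:=v] = R t p'" unfolding x_def p'_def v'(2) using R_upd[OF i lp] by simp
      have vc: "v' \<le> c" using v'(1) pig[OF i] by simp
      have p'V: "p' \<in> hverts n d" unfolding p'_def using hv_upd'[OF pV vc] .
      have u': "u p' + p!i = u p + v'" unfolding p'_def using u_upd_low[OF True lp] .
      have W': "W p' = W p" unfolding p'_def using W_upd_low[OF True] .
      have s': "u p' + W p' \<le> c" using u' W' v'(1) gsum unfolding U_def w_def by simp
      have piv: "p!i < v'" using v'(1) by simp
      have lt1: "c - u p' < c - u p" using u' piv s' by linarith
      have "c - u p' + 1 \<le> c - u p" using lt1 by simp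
      then have "(c - u p' + 1)*(c+1) \<le> (c - u p)*(c+1)" by (rule mult_le_mono1)
      then have "(c - u p')*(c+1) + (c+1) \<le> (c - u p)*(c+1)" by (simp add: distrib_right)
      moreover have "W p \<le> c" using sA by simp
      ultimately have "(c - u p')*(c+1) + W p' < (c - u p)*(c+1) + W p" using W' by simp
      then show ?thesis unfolding eq using IH[OF tT p'V s'] by blast
    next
      case False
      have i2: "2 \<le> i" using False by simp
      have tb: "t!i \<le> 1" using Tset_le1[OF tT i] .
      obtain b v' where bv: "v' \<in> Sx i" "v = R1 b v'" "b = t!i \<or> b = 1 - t!i"
        using v False unfolding J_def by auto
      define t' where "t' = t[i:=b]"
      have t'T: "t' \<in> Tset d" unfolding t'_def using T_flip[OF tT i2] bv(3) tb by auto
      define p' where "p' = p[i:=v']"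
      have eq: "x[i:=v] = R t' p'"
        unfolding x_def p'_def t'_def bv(2) using R_flip[OF i lp lt] by simp
      have vc: "v' \<le> c" using bv(1) Sxc[OF i] by auto
      have p'V: "p' \<in> hverts n d" unfolding p'_def using hv_upd'[OF pV vc] .
      have u': "u p' = u p" unfolding p'_def using u_upd_high[OF i2] .
      have W': "W p' + p!i = W p + v'" unfolding p'_def using W_upd[OF i2 i lp] .
      show ?thesis
      proof (cases "v' < p!i")
        case True
        have s': "u p' + W p' \<le> c" using u' W' True sA by simp
        have "(c - u p')*(c+1) + W p' < (c - u p)*(c+1) + W p" using u' W' True by simp
        then show ?thesis unfolding eq using IH[OF t'T p'V s'] by blast
      next
        case False
        then have v'r: "p!i+g-f \<le> v'" "v' \<le> p!i+g" using bv(1) unfolding Sx_def by auto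
        have s': "u p' + W p' \<le> c" using u' W' v'r gsum unfolding U_def w_def by linarith
        have p'A: "p' \<in> setA n r d" using p'V s' by (simp add: setA_iff u_def)
        have Wf: "W p' + f \<ge> c - U" using W' v'r fg gsum unfolding U_def w_def by linarith
        have "e * (W p' + f) \<ge> e * (c - U)" using Wf by simp
        then have "e * W p' + e * f \<ge> e * c - e * U" by (simp add: algebra_simps diff_mult_distrib2)
        moreover have "e * U \<le> e * c" using Uwc by simp
        ultimately have "(e+1) * U + e * W p' \<ge> e * c" using ef by (simp add: algebra_simps)
        then have "\<not> ((d-1)*u p' + (d-2)*W p' < (d-2)*c)"
          using dm1 u' unfolding e_def U_def by simp
        then have "p' \<notin> setB n r d" by (simp add: setB_iff u_def)
        then have "p' \<in> setC n r d" using p'A by (simp add: setC_def)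
        then show ?thesis unfolding eq using R_calC[OF t'T] calC_CL by blast
      qed
    qed
    have Jsub: "J i \<subseteq> {..<n} - {x!i}" if i: "i < d" for i
    proof
      fix v assume v: "v \<in> J i"
      have tb: "t!i \<le> 1" using Tset_le1[OF tT i] .
      have xi: "x!i = R1 (t!i) (p!i)" unfolding x_def using i by simp
      have pic: "p!i \<le> c" using pig[OF i] by simp
      show "v \<in> {..<n} - {x!i}"
      proof (cases "i < 2")
        case True
        then obtain v' where v': "v' \<in> {p!i+1..p!i+g}" "v = R1 (t!i) v'"
          using v unfolding J_def by auto
        have "v' < n" using v'(1) pig[OF i] n_ge by simp
        moreover have "p!i < n" using pic n_ge by simp
        moreover have "v' \<noteq> p!i" using v'(1) by simp
        ultimately show ?thesis using v'(2) xi R1_lt inj_onD[OF R1_inj, of "t!i" v' "p!i"] by auto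
      next
        case False
        then obtain b v' where bv: "v' \<in> Sx i" "v = R1 b v'" "b = t!i \<or> b = 1 - t!i"
          using v unfolding J_def by auto
        have vc: "v' \<le> c" using bv(1) Sxc[OF i] by auto
        have vn: "v' < n" using vc n_ge by simp
        have "v' \<noteq> p!i" using bv(1) fg unfolding Sx_def by auto
        have pin: "p!i < n" using pic n_ge by simp
        have "v \<noteq> x!i"
        proof (cases "b = t!i")
          case True
          then show ?thesis using bv(2) xi inj_onD[OF R1_inj, of "t!i" v' "p!i"] vn pin \<open>v' \<noteq> p!i\<close> by auto
        next
          case False
          then have "b = 1 - t!i" using bv(3) by simp
          then show ?thesis using bv(2) xi R1_opp[OF tb vc pic] by simp
        qed
        then show ?thesis using bv(2) R1_lt[OF vn] by simp
      qed
    qed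
    have cardJ01: "card (J i) = g" if "i < 2" for i
    proof -
      have i: "i < d" using that d2 by simp
      have "{p!i+1..p!i+g} \<subseteq> {..<n}" using pig[OF i] n_ge by auto
      then show ?thesis unfolding J_def using that card_R1 by simp
    qed
    have cardJ2: "card (J i) = 2 * (p!i + f + 1)" if "2 \<le> i" "i < d" for i
    proof -
      have "card (J i) = 2 * card (Sx i)"
        unfolding J_def using that card_R1_both[OF Tset_le1[OF tT that(2)] Sxc[OF that(2)]] by simp
      then show ?thesis unfolding Sx_def using card_two_ranges[OF fg] by simp
    qed
    have sum1: "(\<Sum>i<d. card (J i)) = card (J 0) + card (J 1) + (\<Sum>i\<in>{2..<d}. card (J i))"
      by (rule sum_split_gen)
    have sum2: "(\<Sum>i\<in>{2..<d}. card (J i)) = (\<Sum>i\<in>{2..<d}. 2 * (p!i + f + 1))"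
    proof (rule sum.cong)
      fix i assume "i \<in> {2..<d}"
      then show "card (J i) = 2 * (p!i + f + 1)" using cardJ2 by simp
    qed simp
    have sum3: "(\<Sum>i\<in>{2..<d}. 2 * (p!i + f + 1)) = 2 * (\<Sum>i\<in>{2..<d}. p!i + (f + 1))"
      by (simp only: sum_distrib_left add.assoc)
    have sum4: "(\<Sum>i\<in>{2..<d}. p!i + (f + 1)) = W p + e * (f + 1)"
    proof -
      have "(\<Sum>i\<in>{2..<d}. p!i + (f + 1)) = (\<Sum>i\<in>{2..<d}. p!i) + (\<Sum>i\<in>{2..<d}. (f + 1))"
        by (rule sum.distrib)
      moreover have "(\<Sum>i\<in>{2..<d}. (f + 1)) = e * (f + 1)" by (simp add: e_def)
      ultimately show ?thesis by (simp add: W_def)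
    qed
    have c0: "card (J 0) = g" using cardJ01 by simp
    have c1: "card (J 1) = g" using cardJ01 by simp
    have sumJ: "(\<Sum>i<d. card (J i)) = 2*g + 2 * w + 2 * (e * (f+1))"
      unfolding sum1 sum2 sum3 sum4 c0 c1 w_def by simp
    have rle: "r \<le> (\<Sum>i<d. card (J i))"
      using sumJ ef1 r_le gsum by linarith
    have "x \<in> CL"
    proof (rule act[OF xV, of "{..<d}" J])
      show "{..<d} \<subseteq> {..<d}" by simp
      show "J i \<subseteq> {..<n} - {x!i}" if "i \<in> {..<d}" for i using Jsub that by simp
      show "x[i:=v] \<in> CL" if "i \<in> {..<d}" "v \<in> J i" for i v using inCL that by simp
      show "r \<le> (\<Sum>i\<in>{..<d}. card (J i))" using rle .
    qed
    then show ?thesis unfolding x_def .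
  qed
qed

end


context S
begin

definition dep :: "nat \<Rightarrow> nat" where "dep v = min v (n - 1 - v)"
definition M :: "nat list \<Rightarrow> nat" where "M x = (\<Sum>i\<in>{2..<d}. dep (x!i))"
definition D :: "nat \<Rightarrow> nat set" where "D a = {..<a} \<union> {n-a..<n}"

lemma dep2: "2 * dep v \<le> n - 1" by (simp add: dep_def)

lemma dep_R1: "v < n \<Longrightarrow> dep (R1 b v) = dep v"
  by (simp add: dep_def R1_def min.commute)

lemma D_mem: "a \<le> n \<Longrightarrow> v \<in> D a \<Longrightarrow> v < n \<and> dep v < a"
  by (auto simp: D_def dep_def)

lemma D_card: "2 * a \<le> n \<Longrightarrow> card (D a) = 2 * a"
proof -
  assume a: "2 * a \<le> n"
  have "{..<a} \<inter> {n-a..<n} = {}" using a by auto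
  then have "card (D a) = card {..<a} + card {n-a..<n}" unfolding D_def by (simp add: card_Un_disjoint)
  then show ?thesis using a by simp
qed

lemma M_upd_low: "i < 2 \<Longrightarrow> M (p[i:=v]) = M p"
  unfolding M_def by (rule sum.cong) auto

lemma M_upd: assumes "2 \<le> i" "i < d" "length p = d" shows "M (p[i:=v]) + dep (p!i) = M p + dep v"
proof -
  have fin: "finite {2..<d}" by simp
  have iS: "i \<in> {2..<d}" using assms by simp
  have "M (p[i:=v]) = dep (p[i:=v]!i) + (\<Sum>j\<in>{2..<d}-{i}. dep (p[i:=v]!j))"
    unfolding M_def using sum.remove[OF fin iS] by blast
  also have "(\<Sum>j\<in>{2..<d}-{i}. dep (p[i:=v]!j)) = (\<Sum>j\<in>{2..<d}-{i}. dep (p!j))"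
    by (rule sum.cong) auto
  finally have 1: "M (p[i:=v]) = dep v + (\<Sum>j\<in>{2..<d}-{i}. dep (p!j))" using assms by simp
  have 2: "M p = dep (p!i) + (\<Sum>j\<in>{2..<d}-{i}. dep (p!j))"
    unfolding M_def using sum.remove[OF fin iS] by blast
  show ?thesis using 1 2 by simp
qed

lemma Ucrit:
  assumes x: "x \<in> hverts n d" and t: "t \<in> Tset d" and s: "(\<Sum>i<d. R1 (t!i) (x!i)) \<le> c"
  shows "x \<in> CL"
proof -
  define p where "p = R t x"
  have pV: "p \<in> hverts n d" unfolding p_def using x by (rule R_hverts)
  have "(\<Sum>i<d. p!i) = (\<Sum>i<d. R1 (t!i) (x!i))" unfolding p_def by simp
  then have "u p + W p \<le> c" using s sum_split[of p] by (simp add: u_def)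
  then have "R t p \<in> CL" using step1[OF t pV] by blast
  then show ?thesis unfolding p_def using R_inv[OF x] by simp
qed

lemma Ucrit2:
  assumes x: "x \<in> hverts n d" and b: "b \<le> 1" and s: "R1 b (x!0) + R1 b (x!1) + M x \<le> c"
  shows "x \<in> CL"
proof -
  define t where "t = map (\<lambda>i. if i < 2 then b else (if x!i \<le> n-1-x!i then 0 else 1)) [0..<d]"
  have tT: "t \<in> Tset d" unfolding t_def Tset_def using b d2 by auto
  have t0: "t!0 = b" "t!1 = b" unfolding t_def using d2 by auto
  have ti: "R1 (t!i) (x!i) = dep (x!i)" if "i \<in> {2..<d}" for i
    using that unfolding t_def by (auto simp: R1_def dep_def)
  have "(\<Sum>i<d. R1 (t!i) (x!i)) = R1 (t!0) (x!0) + R1 (t!1) (x!1) + (\<Sum>i\<in>{2..<d}. R1 (t!i) (x!i))"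
    by (rule sum_split_gen)
  also have "(\<Sum>i\<in>{2..<d}. R1 (t!i) (x!i)) = M x" unfolding M_def using ti by (rule sum.cong[OF refl])
  finally have "(\<Sum>i<d. R1 (t!i) (x!i)) = R1 b (x!0) + R1 b (x!1) + M x" using t0 by simp
  then show ?thesis using Ucrit[OF x tT] s by simp
qed

lemma high_nb:
  assumes y: "y \<in> hverts n d" and i: "i \<in> {2..<d}"
  shows "D (dep (y!i)) \<subseteq> {..<n} - {y!i}"
    and "\<And>v. v \<in> D (dep (y!i)) \<Longrightarrow> y[i:=v] \<in> hverts n d \<and> M (y[i:=v]) < M y"
    and "card (D (dep (y!i))) = 2 * dep (y!i)"
proof -
  have an: "dep (y!i) \<le> n" using dep2[of "y!i"] by simp
  note D_mem = D_mem[OF an]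
  show "D (dep (y!i)) \<subseteq> {..<n} - {y!i}" using D_mem by blast
  show "y[i:=v] \<in> hverts n d \<and> M (y[i:=v]) < M y" if "v \<in> D (dep (y!i))" for v
  proof
    show "y[i:=v] \<in> hverts n d" using D_mem[OF that] hverts_upd[OF y] by blast
    have "M (y[i:=v]) + dep (y!i) = M y + dep v" using M_upd i hv_len[OF y] by simp
    then show "M (y[i:=v]) < M y" using D_mem[OF that] by simp
  qed
  have "2 * dep (y!i) \<le> n" using dep2[of "y!i"] by simp
  then show "card (D (dep (y!i))) = 2 * dep (y!i)" by (rule D_card)
qed

lemma sum_high: "(\<Sum>i\<in>{2..<d}. card (D (dep (y!i)))) = 2 * M y"
proof -
  have "(\<Sum>i\<in>{2..<d}. card (D (dep (y!i)))) = (\<Sum>i\<in>{2..<d}. 2 * dep (y!i))"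
  proof (rule sum.cong[OF refl])
    fix i assume "i \<in> {2..<d}"
    have "2 * dep (y!i) \<le> n" using dep2[of "y!i"] by simp
    then show "card (D (dep (y!i))) = 2 * dep (y!i)" by (rule D_card)
  qed
  then show ?thesis unfolding M_def by (simp add: sum_distrib_left)
qed

end


context S
begin

lemma R1_flip: "b \<le> 1 \<Longrightarrow> v < n \<Longrightarrow> R1 (1-b) (R1 b v) = n - 1 - v"
  by (cases "b = 0") (auto simp: R1_def)

lemma R1_b_eq: "b \<le> 1 \<Longrightarrow> v < n \<Longrightarrow> w < n \<Longrightarrow> R1 b v = R1 b w \<Longrightarrow> v = w"
  using inj_onD[OF R1_inj] by blast

lemma card_R1_ranges:
  assumes "a \<le> n - k" "k \<le> n"
  shows "card (R1 b ` ({..<a} \<union> {n-k..<n})) = a + k"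
proof -
  have sub: "{..<a} \<union> {n-k..<n} \<subseteq> {..<n}" using assms by auto
  have "{..<a} \<inter> {n-k..<n} = {}" using assms by auto
  then have "card ({..<a} \<union> {n-k..<n}) = a + (n - (n - k))" by (simp add: card_Un_disjoint)
  moreover have "n - (n - k) = k" using assms by simp
  ultimately show ?thesis using card_R1[OF sub] by simp
qed

lemma card_R1_ranges2:
  assumes "e < q" "q < n"
  shows "card (R1 b ` ({..e} \<union> {q+1..<n})) = e + 1 + (n - 1 - q)"
proof -
  have sub: "{..e} \<union> {q+1..<n} \<subseteq> {..<n}" using assms by auto
  have "{..e} \<inter> {q+1..<n} = {}" using assms by auto
  then have "card ({..e} \<union> {q+1..<n}) = (e + 1) + (n - (q+1))" by (simp add: card_Un_disjoint)
  then show ?thesis using card_R1[OF sub] by simp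
qed

lemma inner_k:
  assumes outer: "\<And>z. z \<in> hverts n d \<Longrightarrow> M z < m \<Longrightarrow> z \<in> CL" and mc: "m \<le> c"
    and ainner: "\<And>z. z \<in> hverts n d \<Longrightarrow> M z = m \<Longrightarrow> dep (z!0) < a \<Longrightarrow> z \<in> CL"
    and b: "b \<le> 1" and ac: "a \<le> c - m"
    and y: "y \<in> hverts n d" "M y = m" "R1 b (y!0) = a"
  shows "y \<in> CL"
  using y
proof (induction "n - 1 - R1 b (y!1)" arbitrary: y rule: less_induct)
  case less
  note yV = less.prems(1) and yM = less.prems(2) and ya = less.prems(3)
  have ly: "length y = d" using yV by (rule hv_len)
  have y0n: "y!0 < n" and y1n: "y!1 < n" using yV d2 by (auto simp: hverts_def)
  define q where "q = R1 b (y!1)"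
  define k where "k = n - 1 - q"
  define c' where "c' = c - m"
  have qn: "q < n" unfolding q_def using R1_lt[OF y1n] .
  have y1q: "y!1 = R1 b q" unfolding q_def using R1_R1[OF y1n] by simp
  have y0a: "y!0 = R1 b a" using ya R1_R1[OF y0n] by metis
  have acc: "a \<le> c'" using ac c'_def by simp
  have cc: "c' + m = c" using mc c'_def by simp
  have an: "a < n" using acc cc n_ge by linarith
  show ?case
  proof (cases "a + q + m \<le> c")
    case True then show ?thesis using Ucrit2[OF yV b] ya yM q_def by simp
  next
    case False
    then have qa: "c' - a < q" using cc acc by linarith
    define mx where "mx = max a (c' + 1 - k)"
    have mxc: "mx \<le> c' + 1" unfolding mx_def using acc by simp
    have amx: "a + mx < n" using mxc acc cc n_ge by linarith
    define J where "J = (\<lambda>i. if i = 0 then R1 b ` ({..<a} \<union> {n - mx..<n})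
        else if i = 1 then R1 b ` ({..c'-a} \<union> {q+1..<n}) else D (dep (y!i)))"
    have Jsub: "J i \<subseteq> {..<n} - {y!i}" if i: "i < d" for i
    proof (cases "i < 2")
      case True
      show ?thesis
      proof
        fix v assume v: "v \<in> J i"
        show "v \<in> {..<n} - {y!i}"
        proof (cases "i = 0")
          case True
          then have "v \<in> R1 b ` ({..<a} \<union> {n - mx..<n})" using v J_def by simp
          then obtain v' where v': "v' \<in> {..<a} \<union> {n - mx..<n}" "v = R1 b v'" by blast
          have v'n: "v' < n" using v'(1) an by auto
          have "v' \<noteq> a" using v'(1) amx by auto
          then have "v \<noteq> y!0" using R1_b_eq[OF b v'n an] v'(2) y0a by auto
          then show ?thesis using True v'(2) R1_lt[OF v'n] by simp
        next
          case False
          then have i1: "i = 1" using \<open>i < 2\<close> by simp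
          then have "v \<in> R1 b ` ({..c'-a} \<union> {q+1..<n})" using v J_def by simp
          then obtain v' where v': "v' \<in> {..c'-a} \<union> {q+1..<n}" "v = R1 b v'" by blast
          have v'n: "v' < n" using v'(1) qa qn by auto
          have "v' \<noteq> q" using v'(1) qa by auto
          then have "v \<noteq> y!1" using R1_b_eq[OF b v'n qn] v'(2) y1q by auto
          then show ?thesis using i1 v'(2) R1_lt[OF v'n] by simp
        qed
      qed
    next
      case False
      then have "i \<in> {2..<d}" using i by simp
      then show ?thesis using high_nb(1)[OF yV] False J_def by simp
    qed
    have inCL: "y[i:=v] \<in> CL" if i: "i < d" and v: "v \<in> J i" for i v
    proof -
      have vn: "v < n" using Jsub[OF i] v by auto
      have y'V: "y[i:=v] \<in> hverts n d" using hverts_upd[OF yV vn] .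
      show ?thesis
      proof (cases "i < 2")
        case True
        have My': "M (y[i:=v]) = m" using M_upd_low[OF True] yM by simp
        show ?thesis
        proof (cases "i = 0")
          case True
          then have "v \<in> R1 b ` ({..<a} \<union> {n - mx..<n})" using v J_def by simp
          then obtain v' where v': "v' \<in> {..<a} \<union> {n - mx..<n}" "v = R1 b v'" by blast
          have v'n: "v' < n" using v'(1) an by auto
          have dy: "dep (y[i:=v]!0) = dep v'" using True ly d2 v'(2) dep_R1[OF v'n] by simp
          show ?thesis
          proof (cases "v' < a \<or> n - a \<le> v'")
            case True
            then have "dep v' < a" using v'n unfolding dep_def by auto
            then show ?thesis using ainner[OF y'V My'] dy by simp
          next
            case False
            then have v'r: "n - mx \<le> v'" "v' < n - a" using v'(1) by auto
            then have mxe: "mx = c' + 1 - k" unfolding mx_def by auto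
            have kk: "n - 1 - v' + k \<le> c'" using v'r mxe v'n by linarith
            have e0: "R1 (1-b) (y[i:=v]!0) = n - 1 - v'"
              using True ly d2 v'(2) R1_flip[OF b v'n] by simp
            have e1: "R1 (1-b) (y[i:=v]!1) = k"
              using True ly d2 y1q R1_flip[OF b qn] k_def by simp
            have "R1 (1-b) (y[i:=v]!0) + R1 (1-b) (y[i:=v]!1) + M (y[i:=v]) \<le> c"
              unfolding e0 e1 My' using kk cc by linarith
            moreover have "1 - b \<le> 1" by simp
            ultimately show ?thesis using Ucrit2[OF y'V] by blast
          qed
        next
          case False
          then have i1: "i = 1" using \<open>i < 2\<close> by simp
          then have "v \<in> R1 b ` ({..c'-a} \<union> {q+1..<n})" using v J_def by simp
          then obtain v' where v': "v' \<in> {..c'-a} \<union> {q+1..<n}" "v = R1 b v'" by blast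
          have v'n: "v' < n" using v'(1) qa qn by auto
          have e1: "R1 b (y[i:=v]!1) = v'" using i1 ly d2 v'(2) R1_R1[OF v'n] by simp
          have e0: "R1 b (y[i:=v]!0) = a" using i1 ya by simp
          show ?thesis
          proof (cases "v' \<le> c' - a")
            case True
            have "R1 b (y[i:=v]!0) + R1 b (y[i:=v]!1) + M (y[i:=v]) \<le> c"
              unfolding e0 e1 My' using True acc cc by linarith
            then show ?thesis using Ucrit2[OF y'V b] by simp
          next
            case False
            then have "q < v'" using v'(1) by auto
            then have "n - 1 - R1 b (y[i:=v]!1) < n - 1 - R1 b (y!1)"
              unfolding e1 q_def[symmetric] using v'n by linarith
            then show ?thesis using less.hyps y'V My' e0 by blast
          qed
        qed
      next
        case False
        then have i2: "i \<in> {2..<d}" using i by simp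
        then have "v \<in> D (dep (y!i))" using v J_def False by simp
        then have "M (y[i:=v]) < m" using high_nb(2)[OF yV i2] yM by blast
        then show ?thesis using outer y'V by blast
      qed
    qed
    have c0: "card (J 0) = a + mx"
    proof -
      have "a \<le> n - mx" "mx \<le> n" using amx by linarith+
      then show ?thesis using card_R1_ranges[of a mx b] unfolding J_def by simp
    qed
    have c1: "card (J 1) = c' - a + 1 + k"
      using card_R1_ranges2[OF qa qn, of b] unfolding J_def k_def by simp
    have c2: "(\<Sum>i\<in>{2..<d}. card (J i)) = 2 * m"
    proof -
      have "(\<Sum>i\<in>{2..<d}. card (J i)) = (\<Sum>i\<in>{2..<d}. card (D (dep (y!i))))"
        by (rule sum.cong[OF refl]) (simp add: J_def)
      then show ?thesis using sum_high[of y] yM by simp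
    qed
    have sumJ: "(\<Sum>i<d. card (J i)) = a + mx + (c' - a + 1 + k) + 2 * m"
      using sum_split_gen[of "\<lambda>i. card (J i)"] c0 c1 c2 by simp
    have mx1: "c' + 1 - k \<le> mx" unfolding mx_def by simp
    have kk: "c' + 1 \<le> (c' + 1 - k) + k" by simp
    have rle: "r \<le> (\<Sum>i<d. card (J i))"
      using sumJ mx1 kk r_le cc acc by linarith
    show ?thesis
    proof (rule act[OF yV, of "{..<d}" J])
      show "{..<d} \<subseteq> {..<d}" by simp
      show "J i \<subseteq> {..<n} - {y!i}" if "i \<in> {..<d}" for i using Jsub that by simp
      show "y[i:=v] \<in> CL" if "i \<in> {..<d}" "v \<in> J i" for i v using inCL that by simp
      show "r \<le> (\<Sum>i\<in>{..<d}. card (J i))" using rle .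
    qed
  qed
qed

end


context S
begin

lemma slice:
  assumes outer: "\<And>z. z \<in> hverts n d \<Longrightarrow> M z < m \<Longrightarrow> z \<in> CL" and mc: "m \<le> c"
  shows "y \<in> hverts n d \<Longrightarrow> M y = m \<Longrightarrow> y \<in> CL"
proof (induction "dep (y!0)" arbitrary: y rule: less_induct)
  case less
  note yV = less.prems(1) and yM = less.prems(2)
  define a where "a = dep (y!0)"
  have ainner: "\<And>z. z \<in> hverts n d \<Longrightarrow> M z = m \<Longrightarrow> dep (z!0) < a \<Longrightarrow> z \<in> CL"
    using less.hyps unfolding a_def by blast
  have ly: "length y = d" using yV by (rule hv_len)
  show ?case
  proof (cases "a \<le> c - m")
    case True
    define b where "b = (if y!0 \<le> n-1-y!0 then 0 else (1::nat))"
    have b1: "b \<le> 1" unfolding b_def by simp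
    have "R1 b (y!0) = a" by (simp add: b_def R1_def dep_def a_def)
    then show ?thesis using inner_k[OF outer mc ainner b1 True yV yM] by blast
  next
    case False
    have a2: "2 * a \<le> n" using dep2[of "y!0"] unfolding a_def by simp
    have an: "a \<le> n" using a2 by simp
    define J where "J = (\<lambda>i. if i = 0 then D a else if i = 1 then {} else D (dep (y!i)))"
    have Jsub: "J i \<subseteq> {..<n} - {y!i}" if i: "i < d" for i
    proof (cases "i < 2")
      case True
      show ?thesis
      proof (cases "i = 0")
        case True
        then show ?thesis using D_mem[OF an] a_def J_def by fastforce
      next
        case False
        then show ?thesis using J_def \<open>i < 2\<close> by simp
      qed
    next
      case False
      then have "i \<in> {2..<d}" using i by simp
      then show ?thesis using high_nb(1)[OF yV] False J_def by simp
    qed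
    have inCL: "y[i:=v] \<in> CL" if i: "i < d" and v: "v \<in> J i" for i v
    proof -
      have vn: "v < n" using Jsub[OF i] v by auto
      have y'V: "y[i:=v] \<in> hverts n d" using hverts_upd[OF yV vn] .
      show ?thesis
      proof (cases "i < 2")
        case True
        then have i0: "i = 0" using v J_def by (cases "i = 0") auto
        have My': "M (y[i:=v]) = m" using M_upd_low[OF True] yM by simp
        have "dep v < a" using D_mem[OF an] v i0 J_def by simp
        then have "dep (y[i:=v]!0) < a" using i0 ly d2 by simp
        then show ?thesis using ainner[OF y'V My'] by blast
      next
        case False
        then have i2: "i \<in> {2..<d}" using i by simp
        then have "v \<in> D (dep (y!i))" using v J_def False by simp
        then have "M (y[i:=v]) < m" using high_nb(2)[OF yV i2] yM by blast
        then show ?thesis using outer y'V by blast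
      qed
    qed
    have c0: "card (J 0) = 2 * a" using D_card[OF a2] J_def by simp
    have c1: "card (J 1) = 0" using J_def by simp
    have c2: "(\<Sum>i\<in>{2..<d}. card (J i)) = 2 * m"
    proof -
      have "(\<Sum>i\<in>{2..<d}. card (J i)) = (\<Sum>i\<in>{2..<d}. card (D (dep (y!i))))"
        by (rule sum.cong[OF refl]) (simp add: J_def)
      then show ?thesis using sum_high[of y] yM by simp
    qed
    have sumJ: "(\<Sum>i<d. card (J i)) = 2 * a + 2 * m"
      using sum_split_gen[of "\<lambda>i. card (J i)"] c0 c1 c2 by simp
    have rle: "r \<le> (\<Sum>i<d. card (J i))"
      using sumJ False r_le mc by linarith
    show ?thesis
    proof (rule act[OF yV, of "{..<d}" J])
      show "{..<d} \<subseteq> {..<d}" by simp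
      show "J i \<subseteq> {..<n} - {y!i}" if "i \<in> {..<d}" for i using Jsub that by simp
      show "y[i:=v] \<in> CL" if "i \<in> {..<d}" "v \<in> J i" for i v using inCL that by simp
      show "r \<le> (\<Sum>i\<in>{..<d}. card (J i))" using rle .
    qed
  qed
qed

lemma all_CL: "y \<in> hverts n d \<Longrightarrow> y \<in> CL"
proof (induction "M y" arbitrary: y rule: less_induct)
  case less
  note yV = less.prems(1)
  have outer: "\<And>z. z \<in> hverts n d \<Longrightarrow> M z < M y \<Longrightarrow> z \<in> CL" using less.hyps by blast
  show ?case
  proof (cases "M y \<le> c")
    case True
    then show ?thesis using slice[OF outer True yV] by blast
  next
    case False
    define J where "J = (\<lambda>i. if i < 2 then {} else D (dep (y!i)))"
    have Jsub: "J i \<subseteq> {..<n} - {y!i}" if i: "i < d" for i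
    proof (cases "i < 2")
      case True then show ?thesis using J_def by simp
    next
      case False
      then have "i \<in> {2..<d}" using i by simp
      then show ?thesis using high_nb(1)[OF yV] False J_def by simp
    qed
    have inCL: "y[i:=v] \<in> CL" if i: "i < d" and v: "v \<in> J i" for i v
    proof -
      have vn: "v < n" using Jsub[OF i] v by auto
      have y'V: "y[i:=v] \<in> hverts n d" using hverts_upd[OF yV vn] .
      have nl: "\<not> i < 2" using v J_def by (cases "i < 2") auto
      then have i2: "i \<in> {2..<d}" using i by simp
      then have "v \<in> D (dep (y!i))" using v J_def nl by simp
      then have "M (y[i:=v]) < M y" using high_nb(2)[OF yV i2] by blast
      then show ?thesis using outer y'V by blast
    qed
    have c2: "(\<Sum>i\<in>{2..<d}. card (J i)) = 2 * M y"
    proof -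
      have "(\<Sum>i\<in>{2..<d}. card (J i)) = (\<Sum>i\<in>{2..<d}. card (D (dep (y!i))))"
        by (rule sum.cong[OF refl]) (simp add: J_def)
      then show ?thesis using sum_high[of y] by simp
    qed
    have sumJ: "(\<Sum>i<d. card (J i)) = 2 * M y"
      using sum_split_gen[of "\<lambda>i. card (J i)"] c2 J_def by simp
    have rle: "r \<le> (\<Sum>i<d. card (J i))"
      using sumJ False r_le by linarith
    show ?thesis
    proof (rule act[OF yV, of "{..<d}" J])
      show "{..<d} \<subseteq> {..<d}" by simp
      show "J i \<subseteq> {..<n} - {y!i}" if "i \<in> {..<d}" for i using Jsub that by simp
      show "y[i:=v] \<in> CL" if "i \<in> {..<d}" "v \<in> J i" for i v using inCL that by simp
      show "r \<le> (\<Sum>i\<in>{..<d}. card (J i))" using rle .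
    qed
  qed
qed

end

theorem lemma4p2:
  fixes n r d :: nat
  assumes "r \<ge> 1" and "n \<ge> r + 1" and "d \<ge> 2"
  shows "percolating (hverts n d) (hadj d) r (calC n r d)"
proof -
  interpret S n r d using assms by unfold_locales
  show ?thesis unfolding percolating_def
  proof
    show "calC n r d \<subseteq> hverts n d" by (rule calC_sub)
    show "(\<Union>i. bp_iter (hverts n d) (hadj d) r (calC n r d) i) = hverts n d"
      using CL_sub all_CL unfolding CL_def by blast
  qed
qed


end
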